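(* Let $n,N\ge 1$ be integers. For $c\in\{a,b\}$ let $\alpha^{(c)}\in\mathbb{R}^n$ have strictly positive entries and let $\beta^{(c)}=(\beta_{c,1},\dots,\beta_{c,n})$ with $0\le\beta_{c,i}<1$. Let $\mathcal{A}$ (for resource $a$) and $\mathcal{B}$ (for resource $b$) be finite sets of AIMD matrices built from $(\alpha^{(a)},\beta^{(a)})$ and $(\alpha^{(b)},\beta^{(b)})$ respectively, each containing the corresponding full-decrease drop matrix, denoted $A_1\in\mathcal{A}$ and $B_1\in\mathcal{B}$. Let $\mathcal{A}_\Gamma$ be the set of all matrices $\Gamma=\mathrm{diag}(\gamma_a,\gamma_b)\in\mathbb{R}^{2nN\times 2nN}$ where $\gamma_a$ is built from some $C_1,\dots,C_N\in\mathcal{A}$ and $\gamma_b$ from some $C_1,\dots,C_N\in\mathcal{B}$ as described in the context. Let $\Gamma_1\in\mathcal{A}_\Gamma$ be the matrix obtained by taking $C_1=\dots=C_N=A_1$ for $\gamma_a$ and $C_1=\dots=C_N=B_1$ for $\gamma_b$. Then: (a) For all $\Gamma\in\mathcal{A}_\Gamma$ and all $\zeta\in\mathbb{R}^{2nN}$, $\|\Gamma\zeta\|_{N,1}\le\|\zeta\|_{N,1}$. (b) The subspace $\mathcal{E}=\{\zeta=[z_a^\top\; z_b^\top]^\top\in\mathbb{R}^{2nN}: e^\top z_{a,1}=e^\top z_{b,1}=0\}$ is invariant under every $\Gamma\in\mathcal{A}_\Gamma$. (c) For all $\zeta\in\mathcal{E}$, $\|\Gamma_1\zeta\|_{N,1}\le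 q\|\zeta\|_{N,1}$, where $$q=\max\left(\frac1N\sum_{i=1}^N\beta_a^i,\ \frac1N\sum_{j=1}^N\beta_b^j\right)<1,$$ with $\beta_c=\max_{i}\beta_{c,i}$ the multiplicative-decrease parameter of resource $c\in\{a,b\}$.
   Context: $e=(1,\dots,1)^\top\in\mathbb{R}^n$. An AIMD matrix built from a growth vector $\alpha\in\mathbb{R}^n_{>0}$ and decrease parameters $\beta_1,\dots,\beta_n\in[0,1)$ is a matrix of the form $A=\mathrm{diag}(\tilde\beta)+(e^\top\alpha)^{-1}\alpha(e^\top-\tilde\beta^\top)$ where $\tilde\beta=(\tilde\beta_1,\dots,\tilde\beta_n)^\top$ with each $\tilde\beta_i\in\{\beta_i,1\}$; these matrices are nonnegative and column stochastic. The full-decrease drop matrix is the one with $\tilde\beta_i=\beta_i$ for all $i$. Given $C_1,\dots,C_N\in\mathbb{R}^{n\times n}$, set $P_m=C_mC_{m-1}\cdots C_1$ for $m=1,\dots,N$, and define $\gamma\in\mathbb{R}^{nN\times nN}$ as the $N\times N$ block matrix (blocks of size $n\times n$) whose $k$-th block in the first block column is $\frac1k\sum_{i=0}^{k-1}P_{N-i}$ ($k=1,\dots,N$) and all other blocks are zero. A vector $\zeta\in\mathbb{R}^{2nN}$ is written $\zeta=[z_a^\top\;z_b^\top]^\top$ with $z_c=[z_{c,1}^\top,\dots,z_{c,N}^\top]^\top$, $z_{c,k}\in\mathbb{R}^n$. The norm is $\|\zeta\|_{N,1}=\max_{c\in\{a,b\},\,k=1,\dots,N}\|z_{c,k}\|_1$,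 where $\|\cdot\|_1$ is the 1-norm on $\mathbb{R}^n$. *)

theory Defs
  imports Complex_Main
begin

text \<open>Vectors are functions nat => real (only indices below the dimension matter);
  matrices are functions nat => nat => real, zero outside their size.
  Indices are 0-based internally; block numbers k are 1-based as in the paper.\<close>

definition aimd_entry :: "nat \<Rightarrow> (nat \<Rightarrow> real) \<Rightarrow> (nat \<Rightarrow> real) \<Rightarrow> nat \<Rightarrow> nat \<Rightarrow> real" where
  "aimd_entry n \<alpha> bt i j =
     (if i = j then bt i else 0) + \<alpha> i * (1 - bt j) / (\<Sum>k<n. \<alpha> k)"

text \<open>diag(bt) + (e^T alpha)^{-1} alpha (e^T - bt^T), as an n x n matrix\<close>
definition aimd_mat_of :: "nat \<Rightarrow> (nat \<Rightarrow> real) \<Rightarrow> (nat \<Rightarrow> real) \<Rightarrow> nat \<Rightarrow> nat \<Rightarrow> real" where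
  "aimd_mat_of n \<alpha> bt = (\<lambda>i j. if i < n \<and> j < n then aimd_entry n \<alpha> bt i j else 0)"

definition is_aimd_matrix :: "nat \<Rightarrow> (nat \<Rightarrow> real) \<Rightarrow> (nat \<Rightarrow> real) \<Rightarrow> (nat \<Rightarrow> nat \<Rightarrow> real) \<Rightarrow> bool" where
  "is_aimd_matrix n \<alpha> \<beta> A \<longleftrightarrow>
     (\<exists>bt. (\<forall>i<n. bt i = \<beta> i \<or> bt i = 1) \<and> A = aimd_mat_of n \<alpha> bt)"

definition drop_matrix :: "nat \<Rightarrow> (nat \<Rightarrow> real) \<Rightarrow> (nat \<Rightarrow> real) \<Rightarrow> nat \<Rightarrow> nat \<Rightarrow> real" where
  "drop_matrix n \<alpha> \<beta> = aimd_mat_of n \<alpha> \<beta>"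

definition mat_mult :: "nat \<Rightarrow> (nat \<Rightarrow> nat \<Rightarrow> real) \<Rightarrow> (nat \<Rightarrow> nat \<Rightarrow> real) \<Rightarrow> nat \<Rightarrow> nat \<Rightarrow> real" where
  "mat_mult n A B = (\<lambda>i j. \<Sum>k<n. A i k * B k j)"

definition mat_vec :: "nat \<Rightarrow> (nat \<Rightarrow> nat \<Rightarrow> real) \<Rightarrow> (nat \<Rightarrow> real) \<Rightarrow> nat \<Rightarrow> real" where
  "mat_vec m M x = (\<lambda>i. \<Sum>j<m. M i j * x j)"

definition id_mat :: "nat \<Rightarrow> nat \<Rightarrow> nat \<Rightarrow> real" where
  "id_mat n = (\<lambda>i j. if i < n \<and> i = j then 1 else 0)"

fun prodP :: "nat \<Rightarrow> (nat \<Rightarrow> nat \<Rightarrow> nat \<Rightarrow> real) \<Rightarrow> nat \<Rightarrow> nat \<Rightarrow> nat \<Rightarrow> real" where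
  "prodP n C 0 = id_mat n"
| "prodP n C (Suc m) = mat_mult n (C (Suc m)) (prodP n C m)"

text \<open>gamma (nN x nN): block row k (1-based), first block column is
  (1/k) sum_{i=0}^{k-1} P_{N-i}; all other blocks zero.\<close>
definition gamma :: "nat \<Rightarrow> nat \<Rightarrow> (nat \<Rightarrow> nat \<Rightarrow> nat \<Rightarrow> real) \<Rightarrow> nat \<Rightarrow> nat \<Rightarrow> real" where
  "gamma n N C = (\<lambda>r s.
     if r < n * N \<and> s < n then
       (let k = r div n + 1 in (1 / real k) * (\<Sum>i<k. prodP n C (N - i) (r mod n) s))
     else 0)"

definition diag2 :: "nat \<Rightarrow> (nat \<Rightarrow> nat \<Rightarrow> real) \<Rightarrow> (nat \<Rightarrow> nat \<Rightarrow> real) \<Rightarrow> nat \<Rightarrow> nat \<Rightarrow> real" where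
  "diag2 m M1 M2 = (\<lambda>i j.
     if i < m \<and> j < m then M1 i j
     else if m \<le> i \<and> i < 2 * m \<and> m \<le> j \<and> j < 2 * m then M2 (i - m) (j - m) else 0)"

definition Gamma_set :: "nat \<Rightarrow> nat \<Rightarrow> (nat \<Rightarrow> nat \<Rightarrow> real) set \<Rightarrow> (nat \<Rightarrow> nat \<Rightarrow> real) set
    \<Rightarrow> (nat \<Rightarrow> nat \<Rightarrow> real) set" where
  "Gamma_set n N AA BB =
     {diag2 (n * N) (gamma n N C) (gamma n N D) | C D.
        (\<forall>k\<in>{1..N}. C k \<in> AA) \<and> (\<forall>k\<in>{1..N}. D k \<in> BB)}"

text \<open>zeta = [z_a; z_b], z_c = [z_{c,1}; ...; z_{c,N}];
  z_{a,k} occupies indices (k-1)n .. kn-1, z_{b,k} occupies nN+(k-1)n .. nN+kn-1.\<close>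
definition z_block :: "nat \<Rightarrow> nat \<Rightarrow> (nat \<Rightarrow> real) \<Rightarrow> bool \<Rightarrow> nat \<Rightarrow> nat \<Rightarrow> real" where
  "z_block n N \<zeta> is_b k = (\<lambda>i. \<zeta> ((if is_b then n * N else 0) + (k - 1) * n + i))"

definition norm1 :: "nat \<Rightarrow> (nat \<Rightarrow> real) \<Rightarrow> real" where
  "norm1 n v = (\<Sum>i<n. \<bar>v i\<bar>)"

definition normN1 :: "nat \<Rightarrow> nat \<Rightarrow> (nat \<Rightarrow> real) \<Rightarrow> real" where
  "normN1 n N \<zeta> = Max {norm1 n (z_block n N \<zeta> c k) | c k. k \<in> {1..N}}"

definition E_space :: "nat \<Rightarrow> nat \<Rightarrow> (nat \<Rightarrow> real) set" where
  "E_space n N = {\<zeta>. (\<Sum>i<n. z_block n N \<zeta> False 1 i) = 0 \<and> (\<Sum>i<n. z_block n N \<zeta> True 1 i) = 0}"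

end

theory Submission
  imports Defs
begin

definition cs :: "nat \<Rightarrow> (nat \<Rightarrow> nat \<Rightarrow> real) \<Rightarrow> bool" where
  "cs n M \<longleftrightarrow> (\<forall>i<n. \<forall>j<n. 0 \<le> M i j) \<and> (\<forall>j<n. (\<Sum>i<n. M i j) = 1)"

lemma mat_vec_mult: "mat_vec n (mat_mult n A B) z = mat_vec n A (mat_vec n B z)"
  unfolding mat_vec_def mat_mult_def
  by (auto simp: sum_distrib_left sum_distrib_right mult.assoc intro!: ext sum.swap)

lemma cs_mult: assumes A: "cs n A" and B: "cs n B" shows "cs n (mat_mult n A B)"
  unfolding cs_def mat_mult_def
proof (intro conjI allI impI)
  fix j assume j: "j<n"
  have "(\<Sum>i<n. \<Sum>k<n. A i k * B k j) = (\<Sum>k<n. (\<Sum>i<n. A i k) * B k j)"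
    unfolding sum_distrib_right by (rule sum.swap)
  also have "\<dots> = (\<Sum>k<n. B k j)" using A unfolding cs_def by simp
  also have "\<dots> = 1" using B j unfolding cs_def by simp
  finally show "(\<Sum>i<n. \<Sum>k<n. A i k * B k j) = 1" .
next
  fix i j assume "i<n" "j<n"
  then show "0 \<le> (\<Sum>k<n. A i k * B k j)"
    using A B unfolding cs_def by (intro sum_nonneg) simp
qed

lemma cs_id: "cs n (id_mat n)"
  unfolding cs_def id_mat_def by (auto simp: sum.delta)

lemma cs_aimd:
  assumes "\<forall>i<n. \<alpha> i > 0" "\<forall>i<n. 0 \<le> \<beta> i \<and> \<beta> i < 1" "is_aimd_matrix n \<alpha> \<beta> A"
  shows "cs n A"
proof -
  obtain bt where bt: "\<forall>i<n. bt i = \<beta> i \<or> bt i = 1" and A: "A = aimd_mat_of n \<alpha> bt"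
    using assms(3) unfolding is_aimd_matrix_def by auto
  have b01: "0 \<le> bt i \<and> bt i \<le> 1" if "i<n" for i using bt assms(2) that by force
  have S: "(\<Sum>k<n. \<alpha> k) > 0" if "0<n" using assms(1) that by (intro sum_pos) auto
  show ?thesis unfolding cs_def A aimd_mat_of_def aimd_entry_def
  proof (intro conjI allI impI)
    fix i j assume "i<n" "j<n"
    then show "0 \<le> (if i < n \<and> j < n then (if i = j then bt i else 0) + \<alpha> i * (1 - bt j) / (\<Sum>k<n. \<alpha> k) else 0)"
      using b01[of i] b01[of j] assms(1) S by (auto intro!: add_nonneg_nonneg divide_nonneg_nonneg mult_nonneg_nonneg simp: order.strict_implies_order)
  next
    fix j assume j: "j<n"
    have "(\<Sum>i<n. (if i < n \<and> j < n then (if i = j then bt i else 0) + \<alpha> i * (1 - bt j) / (\<Sum>k<n. \<alpha> k) else 0))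
       = (\<Sum>i<n. (if i = j then bt i else 0)) + (\<Sum>i<n. \<alpha> i) * (1 - bt j) / (\<Sum>k<n. \<alpha> k)"
      using j by (simp add: sum.distrib sum_divide_distrib[symmetric] sum_distrib_right)
    also have "\<dots> = 1" using j S by (simp add: sum.delta)
    finally show "(\<Sum>i<n. (if i < n \<and> j < n then (if i = j then bt i else 0) + \<alpha> i * (1 - bt j) / (\<Sum>k<n. \<alpha> k) else 0)) = 1" .
  qed
qed

lemma cs_prodP: "(\<forall>k\<in>{1..m}. cs n (C k)) \<Longrightarrow> cs n (prodP n C m)"
  by (induction m) (auto simp: cs_id cs_mult)

lemma norm_le:
  assumes "\<forall>i<n. \<forall>j<n. 0 \<le> K i j" "\<forall>j<n. (\<Sum>i<n. K i j) \<le> c"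
  shows "norm1 n (mat_vec n K z) \<le> c * norm1 n z"
proof -
  have "norm1 n (mat_vec n K z) = (\<Sum>i<n. \<bar>\<Sum>j<n. K i j * z j\<bar>)" unfolding norm1_def mat_vec_def by simp
  also have "\<dots> \<le> (\<Sum>i<n. \<Sum>j<n. K i j * \<bar>z j\<bar>)"
    by (intro sum_mono order.trans[OF sum_abs]) (simp add: abs_mult assms(1))
  also have "\<dots> = (\<Sum>j<n. (\<Sum>i<n. K i j) * \<bar>z j\<bar>)" unfolding sum_distrib_right by (rule sum.swap)
  also have "\<dots> \<le> (\<Sum>j<n. c * \<bar>z j\<bar>)" by (intro sum_mono mult_right_mono) (auto simp: assms)
  also have "\<dots> = c * norm1 n z" by (simp add: norm1_def sum_distrib_left)
  finally show ?thesis .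
qed

lemma sum_pres: assumes "cs n M" shows "(\<Sum>i<n. mat_vec n M z i) = (\<Sum>j<n. z j)"
proof -
  have "(\<Sum>i<n. mat_vec n M z i) = (\<Sum>j<n. (\<Sum>i<n. M i j) * z j)"
    unfolding mat_vec_def sum_distrib_right by (rule sum.swap)
  also have "\<dots> = (\<Sum>j<n. z j)" using assms unfolding cs_def by simp
  finally show ?thesis .
qed

lemma drop_contract:
  assumes n: "n \<ge> 1" and a: "\<forall>i<n. \<alpha> i > 0" and b: "\<forall>i<n. 0 \<le> \<beta> i \<and> \<beta> i < 1"
    and z: "(\<Sum>j<n. z j) = 0"
  shows "norm1 n (mat_vec n (drop_matrix n \<alpha> \<beta>) z) \<le> Max (\<beta> ` {..<n}) * norm1 n z"
    and "(\<Sum>i<n. mat_vec n (drop_matrix n \<alpha> \<beta>) z i) = 0"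
proof -
  define bm where "bm = Max (\<beta> ` {..<n})"
  define S where "S = (\<Sum>k<n. \<alpha> k)"
  have S: "S > 0" unfolding S_def using a n by (intro sum_pos) (auto simp: lessThan_empty_iff)
  have bm: "\<beta> j \<le> bm" if "j<n" for j unfolding bm_def using that by (intro Max_ge) auto
  define K where "K = (\<lambda>i j. (if i = j then \<beta> i else 0) + \<alpha> i * (bm - \<beta> j) / S)"
  have eq: "mat_vec n (drop_matrix n \<alpha> \<beta>) z i = mat_vec n K z i" if "i<n" for i
  proof -
    have "mat_vec n (drop_matrix n \<alpha> \<beta>) z i = (\<Sum>j<n. (K i j + \<alpha> i * (1 - bm) / S) * z j)"
      unfolding mat_vec_def drop_matrix_def aimd_mat_of_def aimd_entry_def K_def S_def[symmetric]
      using that S by (intro sum.cong) (auto simp: field_simps)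
    also have "\<dots> = mat_vec n K z i + \<alpha> i * (1 - bm) / S * (\<Sum>j<n. z j)"
      unfolding mat_vec_def by (simp add: distrib_right sum.distrib sum_distrib_left)
    finally show ?thesis using z by simp
  qed
  have "norm1 n (mat_vec n (drop_matrix n \<alpha> \<beta>) z) = norm1 n (mat_vec n K z)"
    unfolding norm1_def using eq by simp
  also have "\<dots> \<le> bm * norm1 n z"
  proof (rule norm_le)
    show "\<forall>i<n. \<forall>j<n. 0 \<le> K i j" unfolding K_def using a b bm S
      by (auto intro!: add_nonneg_nonneg divide_nonneg_nonneg mult_nonneg_nonneg simp: order.strict_implies_order)
    show "\<forall>j<n. (\<Sum>i<n. K i j) \<le> bm"
    proof (intro allI impI)
      fix j assume j: "j<n"
      have "(\<Sum>i<n. K i j) = \<beta> j + (\<Sum>i<n. \<alpha> i) * (bm - \<beta> j) / S"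
        unfolding K_def using j by (simp add: sum.distrib sum_divide_distrib[symmetric] sum_distrib_right sum.delta)
      also have "\<dots> = bm" using S by (simp add: S_def[symmetric])
      finally show "(\<Sum>i<n. K i j) \<le> bm" by simp
    qed
  qed
  finally show "norm1 n (mat_vec n (drop_matrix n \<alpha> \<beta>) z) \<le> Max (\<beta> ` {..<n}) * norm1 n z"
    unfolding bm_def .
  have "cs n (drop_matrix n \<alpha> \<beta>)"
    by (rule cs_aimd[OF a b]) (auto simp: is_aimd_matrix_def drop_matrix_def)
  then show "(\<Sum>i<n. mat_vec n (drop_matrix n \<alpha> \<beta>) z i) = 0" using sum_pres z by simp
qed

lemma drop_pow:
  assumes n: "n \<ge> 1" and a: "\<forall>i<n. \<alpha> i > 0" and b: "\<forall>i<n. 0 \<le> \<beta> i \<and> \<beta> i < 1"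
    and z: "(\<Sum>j<n. z j) = 0"
  shows "norm1 n (mat_vec n (prodP n (\<lambda>_. drop_matrix n \<alpha> \<beta>) m) z) \<le> Max (\<beta> ` {..<n}) ^ m * norm1 n z
     \<and> (\<Sum>i<n. mat_vec n (prodP n (\<lambda>_. drop_matrix n \<alpha> \<beta>) m) z i) = 0"
proof (induction m)
  case 0
  have "mat_vec n (id_mat n) z i = z i" if "i<n" for i
  proof -
    have "mat_vec n (id_mat n) z i = (\<Sum>j<n. if i = j then z j else 0)"
      unfolding mat_vec_def id_mat_def using that by (intro sum.cong) auto
    then show ?thesis using that by (simp add: sum.delta)
  qed
  then show ?case using z by (simp add: norm1_def)
next
  case (Suc m)
  have "\<beta> 0 \<le> Max (\<beta> ` {..<n})" using n by (intro Max_ge) auto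
  moreover have "0 \<le> \<beta> 0" using n b by simp
  ultimately have bm0: "0 \<le> Max (\<beta> ` {..<n})" by linarith
  let ?P = "prodP n (\<lambda>_. drop_matrix n \<alpha> \<beta>)"
  have e: "mat_vec n (?P (Suc m)) z = mat_vec n (drop_matrix n \<alpha> \<beta>) (mat_vec n (?P m) z)"
    by (simp add: mat_vec_mult)
  have "norm1 n (mat_vec n (?P (Suc m)) z) \<le> Max (\<beta> ` {..<n}) * norm1 n (mat_vec n (?P m) z)"
    unfolding e by (rule drop_contract(1)[OF n a b]) (use Suc.IH in blast)
  also have "\<dots> \<le> Max (\<beta> ` {..<n}) * (Max (\<beta> ` {..<n}) ^ m * norm1 n z)"
    by (rule mult_left_mono[OF _ bm0]) (use Suc.IH in blast)
  finally have 1: "norm1 n (mat_vec n (?P (Suc m)) z) \<le> Max (\<beta> ` {..<n}) ^ Suc m * norm1 n z"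
    by (simp add: mult.assoc)
  have 2: "(\<Sum>i<n. mat_vec n (?P (Suc m)) z i) = 0"
    unfolding e by (rule drop_contract(2)[OF n a b]) (use Suc.IH in blast)
  show ?case using 1 2 by blast
qed

lemma gamma_val:
  assumes "1 \<le> k" "k \<le> N" "i < n"
  shows "gamma n N C ((k-1)*n+i) j = (if j < n then (1/real k) * (\<Sum>l<k. prodP n C (N-l) i j) else 0)"
proof -
  have lt: "(k-1)*n+i < n*N"
  proof -
    have "(k-1)*n+i < (k-1)*n + n" using assms by simp
    also have "\<dots> = k*n" using assms by (cases k) auto
    also have "\<dots> \<le> N*n" using assms by simp
    finally show ?thesis by (simp add: mult.commute)
  qed
  have d: "((k-1)*n+i) div n = k-1" and m: "((k-1)*n+i) mod n = i" using assms by auto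
  show ?thesis unfolding gamma_def using lt d m assms by (auto simp: Let_def)
qed

lemma block_a:
  assumes "1 \<le> k" "k \<le> N" "i < n"
  shows "mat_vec (2*n*N) (diag2 (n*N) (gamma n N C) (gamma n N D)) \<zeta> ((k-1)*n+i)
       = (1/real k) * (\<Sum>l<k. mat_vec n (prodP n C (N-l)) \<zeta> i)"
proof -
  have lt: "(k-1)*n+i < n*N"
  proof -
    have "(k-1)*n+i < (k-1)*n + n" using assms by simp
    also have "\<dots> = k*n" using assms by (cases k) auto
    also have "\<dots> \<le> N*n" using assms by simp
    finally show ?thesis by (simp add: mult.commute)
  qed
  have nN0: "n \<le> n*N" using assms by simp
  define f where "f j = (1/real k) * (\<Sum>l<k. prodP n C (N-l) i j) * \<zeta> j" for j
  have pt: "diag2 (n*N) (gamma n N C) (gamma n N D) ((k-1)*n+i) j * \<zeta> j = (if j \<in> {..<n} then f j else 0)" for j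
  proof (cases "j < n")
    case True
    then have "j < n*N" using nN0 by linarith
    then show ?thesis unfolding diag2_def f_def using True lt gamma_val[OF assms, of C j] by simp
  next
    case False
    then show ?thesis unfolding diag2_def f_def using lt gamma_val[OF assms, of C j] by simp
  qed
  have "mat_vec (2*n*N) (diag2 (n*N) (gamma n N C) (gamma n N D)) \<zeta> ((k-1)*n+i)
      = (\<Sum>j<2*n*N. (if j \<in> {..<n} then f j else 0))"
    unfolding mat_vec_def using pt by simp
  also have "\<dots> = sum f ({..<2*n*N} \<inter> {..<n})" by (rule sum.inter_restrict[symmetric]) simp
  also have "{..<2*n*N} \<inter> {..<n} = {..<n}" 
  proof -
    have "n \<le> 2*n*N" using nN0 by linarith
    then show ?thesis by (metis Int_absorb1 lessThan_subset_iff)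
  qed
  also have "sum f {..<n} = (1/real k) * (\<Sum>l<k. mat_vec n (prodP n C (N-l)) \<zeta> i)"
    unfolding f_def mat_vec_def
    by (simp add: sum_distrib_left sum_distrib_right mult.assoc sum.swap[of _ "{..<k}"])
  finally show ?thesis .
qed

lemma block_b:
  assumes "1 \<le> k" "k \<le> N" "i < n"
  shows "mat_vec (2*n*N) (diag2 (n*N) (gamma n N C) (gamma n N D)) \<zeta> (n*N + (k-1)*n+i)
       = (1/real k) * (\<Sum>l<k. mat_vec n (prodP n D (N-l)) (\<lambda>j. \<zeta> (n*N+j)) i)"
proof -
  define m where "m = n*N"
  have lt: "(k-1)*n+i < m"
  proof -
    have "(k-1)*n+i < (k-1)*n + n" using assms by simp
    also have "\<dots> = k*n" using assms by (cases k) auto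
    also have "\<dots> \<le> N*n" using assms by simp
    finally show ?thesis by (simp add: mult.commute m_def)
  qed
  have nm: "n \<le> m" using assms unfolding m_def by simp
  have lt2: "(k-1)*n+i < N*n" using lt by (simp add: m_def mult.commute)
  define f where "f j = (1/real k) * (\<Sum>l<k. prodP n D (N-l) i (j-m)) * \<zeta> j" for j
  have "mat_vec (2*n*N) (diag2 (n*N) (gamma n N C) (gamma n N D)) \<zeta> (n*N + (k-1)*n+i)
      = (\<Sum>j<2*m. (if j \<in> {m..<m+n} then f j else 0))"
    unfolding mat_vec_def diag2_def f_def m_def[symmetric] using lt lt2 gamma_val[OF assms, of D]
    by (intro sum.cong) (auto simp: m_def)
  also have "\<dots> = sum f ({..<2*m} \<inter> {m..<m+n})" by (rule sum.inter_restrict[symmetric]) simp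
  also have "{..<2*m} \<inter> {m..<m+n} = {m..<m+n}" using nm by auto
  also have "sum f {m..<m+n} = (\<Sum>j<n. f (j+m))"
    using sum.shift_bounds_nat_ivl[of f 0 m n] by (simp add: lessThan_atLeast0 add.commute)
  also have "\<dots> = (1/real k) * (\<Sum>l<k. mat_vec n (prodP n D (N-l)) (\<lambda>j. \<zeta> (n*N+j)) i)"
    unfolding f_def mat_vec_def m_def
    by (simp add: sum_distrib_left sum_distrib_right mult.assoc sum.swap[of _ "{..<k}"] add.commute)
  finally show ?thesis .
qed

lemma normN1_set: "{norm1 n (z_block n N \<zeta> c k) | c k. k \<in> {1..N}}
   = (\<lambda>(c,k). norm1 n (z_block n N \<zeta> c k)) ` (UNIV \<times> {1..N})"
  by (auto simp: image_iff) blast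

lemma normN1_ge: "k \<in> {1..N} \<Longrightarrow> norm1 n (z_block n N \<zeta> c k) \<le> normN1 n N \<zeta>"
  unfolding normN1_def normN1_set by (rule Max_ge) auto

lemma normN1_le: "1 \<le> N \<Longrightarrow> (\<And>c k. k \<in> {1..N} \<Longrightarrow> norm1 n (z_block n N \<zeta> c k) \<le> M)
   \<Longrightarrow> normN1 n N \<zeta> \<le> M"
  unfolding normN1_def normN1_set by (subst Max_le_iff) auto

lemma zb1a: "norm1 n (z_block n N \<zeta> False 1) = norm1 n \<zeta>"
  by (simp add: z_block_def norm1_def)
lemma zb1b: "norm1 n (z_block n N \<zeta> True 1) = norm1 n (\<lambda>j. \<zeta> (n*N+j))"
  by (simp add: z_block_def norm1_def)

lemma avg_bound:
  assumes c: "0 \<le> c" and "\<forall>l<k. norm1 n (g l) \<le> b l"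
  shows "norm1 n (\<lambda>i. c * (\<Sum>l<k. g l i)) \<le> c * (\<Sum>l<k. b l)"
proof -
  have "norm1 n (\<lambda>i. c * (\<Sum>l<k. g l i)) = c * (\<Sum>i<n. \<bar>\<Sum>l<k. g l i\<bar>)"
    unfolding norm1_def abs_mult using c by (simp add: sum_distrib_left)
  also have "\<dots> \<le> c * (\<Sum>i<n. \<Sum>l<k. \<bar>g l i\<bar>)"
    by (intro mult_left_mono sum_mono sum_abs) (simp add: c)
  also have "(\<Sum>i<n. \<Sum>l<k. \<bar>g l i\<bar>) = (\<Sum>l<k. norm1 n (g l))"
    unfolding norm1_def by (rule sum.swap)
  also have "c * \<dots> \<le> c * (\<Sum>l<k. b l)"
    using assms by (intro mult_left_mono sum_mono) auto
  finally show ?thesis .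
qed

lemma norm_blk_a:
  assumes "1 \<le> k" "k \<le> N" "\<forall>l<k. norm1 n (mat_vec n (prodP n C (N-l)) \<zeta>) \<le> b l"
  shows "norm1 n (z_block n N (mat_vec (2*n*N) (diag2 (n*N) (gamma n N C) (gamma n N D)) \<zeta>) False k)
     \<le> (1/real k) * (\<Sum>l<k. b l)"
proof -
  have "norm1 n (z_block n N (mat_vec (2*n*N) (diag2 (n*N) (gamma n N C) (gamma n N D)) \<zeta>) False k)
    = norm1 n (\<lambda>i. (1/real k) * (\<Sum>l<k. mat_vec n (prodP n C (N-l)) \<zeta> i))"
    unfolding norm1_def using block_a[OF assms(1,2)] by (intro sum.cong) (auto simp: z_block_def)
  also have "\<dots> \<le> (1/real k) * (\<Sum>l<k. b l)" by (rule avg_bound) (use assms in auto)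
  finally show ?thesis .
qed

lemma norm_blk_b:
  assumes "1 \<le> k" "k \<le> N" "\<forall>l<k. norm1 n (mat_vec n (prodP n D (N-l)) (\<lambda>j. \<zeta> (n*N+j))) \<le> b l"
  shows "norm1 n (z_block n N (mat_vec (2*n*N) (diag2 (n*N) (gamma n N C) (gamma n N D)) \<zeta>) True k)
     \<le> (1/real k) * (\<Sum>l<k. b l)"
proof -
  have "norm1 n (z_block n N (mat_vec (2*n*N) (diag2 (n*N) (gamma n N C) (gamma n N D)) \<zeta>) True k)
    = norm1 n (\<lambda>i. (1/real k) * (\<Sum>l<k. mat_vec n (prodP n D (N-l)) (\<lambda>j. \<zeta> (n*N+j)) i))"
    unfolding norm1_def using block_b[OF assms(1,2)] by (intro sum.cong) (auto simp: z_block_def)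
  also have "\<dots> \<le> (1/real k) * (\<Sum>l<k. b l)" by (rule avg_bound) (use assms in auto)
  finally show ?thesis .
qed

lemma sum_a: "(\<Sum>i<n. z_block n N x False 1 i) = (\<Sum>i<n. x i)"
  by (simp add: z_block_def)
lemma sum_b: "(\<Sum>i<n. z_block n N x True 1 i) = (\<Sum>i<n. x (n*N+i))"
  by (simp add: z_block_def)

lemma geo_reindex: "(\<Sum>l<N. (b::real) ^ (N-l)) = (\<Sum>i=1..N. b ^ i)"
  by (rule sum.reindex_bij_witness[where i="\<lambda>i. N-i" and j="\<lambda>l. N-l"]) auto

lemma avg_ineq:
  fixes b :: real
  assumes b: "0 \<le> b" "b \<le> 1" and k: "1 \<le> k" "k \<le> N"
  shows "(1/real k) * (\<Sum>l<k. b ^ (N-l)) \<le> (\<Sum>i=1..N. b ^ i) / real N"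
proof -
  define a where "a l = b ^ (N-l)" for l
  have mono: "a l \<le> a l'" if "l \<le> l'" for l l'
    unfolding a_def using b that by (intro power_decreasing) auto
  define g where "g = (\<Sum>l<k. a l)"
  define T where "T = (\<Sum>l\<in>{k..<N}. a l)"
  have G: "(\<Sum>i=1..N. b ^ i) = g + T"
    unfolding geo_reindex[symmetric] g_def T_def a_def
    using sum.atLeastLessThan_concat[of 0 k N "\<lambda>l. b^(N-l)"] k by (simp add: lessThan_atLeast0)
  have g1: "g \<le> real k * a k"
    unfolding g_def using sum_bounded_above[of "{..<k}" a "a k"] mono by simp
  have T1: "real (N-k) * a k \<le> T"
    unfolding T_def using sum_bounded_below[of "{k..<N}" "a k" a] mono by simp
  have nk: "real (N-k) = real N - real k" using k by (simp add: of_nat_diff)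
  have g0: "0 \<le> g" unfolding g_def a_def using b by (intro sum_nonneg) simp
  have "(real N - real k) * g \<le> (real N - real k) * (real k * a k)"
    using g1 k by (intro mult_left_mono) auto
  moreover have "real k * ((real N - real k) * a k) \<le> real k * T"
    using T1 nk by (intro mult_left_mono) auto
  ultimately have "real N * g \<le> real k * (g + T)" by (simp add: algebra_simps)
  moreover have "(\<Sum>l<k. b ^ (N-l)) = g" unfolding g_def a_def ..
  ultimately show ?thesis unfolding G using k
    by (simp add: field_simps)
qed

lemma cs_norm: "cs n M \<Longrightarrow> norm1 n (mat_vec n M z) \<le> norm1 n z"
  using norm_le[of n M 1 z] unfolding cs_def by simp

lemma cs_P: "(\<forall>k\<in>{1..N}. cs n (C k)) \<Longrightarrow> m \<le> N \<Longrightarrow> cs n (prodP n C m)"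
  by (rule cs_prodP) auto

lemma Max_props:
  fixes n :: nat and \<beta> :: "nat \<Rightarrow> real"
  assumes "n \<ge> 1" "\<forall>i<n. 0 \<le> \<beta> i \<and> \<beta> i < 1"
  shows "0 \<le> Max (\<beta> ` {..<n}) \<and> Max (\<beta> ` {..<n}) < 1"
proof -
  have "Max (\<beta> ` {..<n}) \<in> \<beta> ` {..<n}" using assms by (intro Max_in finite_imageI) (auto simp: lessThan_empty_iff)
  then show ?thesis using assms by auto
qed

lemma q_lt1:
  fixes b :: real assumes "0 \<le> b" "b < 1" "N \<ge> 1"
  shows "(\<Sum>i=1..N. b ^ i) / real N < 1"
proof -
  have "(\<Sum>i=1..N. b ^ i) < (\<Sum>i=1..N. 1)"
  proof (rule sum_strict_mono)
    fix i assume "i \<in> {1..N}"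
    then have "b ^ i \<le> b ^ 1" using assms by (intro power_decreasing) auto
    then show "b ^ i < 1" using assms by simp
  qed (use assms in auto)
  then show ?thesis using assms by simp
qed

lemma q_nonneg:
  fixes b :: real assumes "0 \<le> b"
  shows "0 \<le> (\<Sum>i=1..N. b ^ i) / real N"
  using assms by (intro divide_nonneg_nonneg sum_nonneg) auto

theorem lemma1:
  fixes n N :: nat
    and \<alpha>a \<alpha>b \<beta>a \<beta>b :: "nat \<Rightarrow> real"
    and AA BB :: "(nat \<Rightarrow> nat \<Rightarrow> real) set"
  assumes "n \<ge> 1" and "N \<ge> 1"
    and "\<forall>i<n. \<alpha>a i > 0" and "\<forall>i<n. \<alpha>b i > 0"
    and "\<forall>i<n. 0 \<le> \<beta>a i \<and> \<beta>a i < 1" and "\<forall>i<n. 0 \<le> \<beta>b i \<and> \<beta>b i < 1"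
    and "finite AA" and "finite BB"
    and "\<forall>A\<in>AA. is_aimd_matrix n \<alpha>a \<beta>a A"
    and "\<forall>B\<in>BB. is_aimd_matrix n \<alpha>b \<beta>b B"
    and "drop_matrix n \<alpha>a \<beta>a \<in> AA"
    and "drop_matrix n \<alpha>b \<beta>b \<in> BB"
  shows "(\<forall>\<Gamma>\<in>Gamma_set n N AA BB. \<forall>\<zeta>.
            normN1 n N (mat_vec (2 * n * N) \<Gamma> \<zeta>) \<le> normN1 n N \<zeta>)
       \<and> (\<forall>\<Gamma>\<in>Gamma_set n N AA BB. \<forall>\<zeta>\<in>E_space n N.
            mat_vec (2 * n * N) \<Gamma> \<zeta> \<in> E_space n N)
       \<and> (let \<Gamma>1 = diag2 (n * N) (gamma n N (\<lambda>_. drop_matrix n \<alpha>a \<beta>a))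
                                 (gamma n N (\<lambda>_. drop_matrix n \<alpha>b \<beta>b));
              ba = Max (\<beta>a ` {..<n});
              bb = Max (\<beta>b ` {..<n});
              q = max ((\<Sum>i=1..N. ba ^ i) / real N) ((\<Sum>j=1..N. bb ^ j) / real N)
          in q < 1 \<and>
             (\<forall>\<zeta>\<in>E_space n N. normN1 n N (mat_vec (2 * n * N) \<Gamma>1 \<zeta>) \<le> q * normN1 n N \<zeta>))"
proof -
  note n = assms(1) and NN = assms(2)
  have csA: "\<forall>A\<in>AA. cs n A" using assms(3,5,9) cs_aimd by blast
  have csB: "\<forall>B\<in>BB. cs n B" using assms(4,6,10) cs_aimd by blast
  have GS: "\<exists>C D. \<Gamma> = diag2 (n * N) (gamma n N C) (gamma n N D) \<and>
       (\<forall>k\<in>{1..N}. cs n (C k)) \<and> (\<forall>k\<in>{1..N}. cs n (D k))" if "\<Gamma> \<in> Gamma_set n N AA BB" for \<Gamma>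
    using that csA csB unfolding Gamma_set_def by blast
  have partA: "normN1 n N (mat_vec (2 * n * N) \<Gamma> \<zeta>) \<le> normN1 n N \<zeta>"
    if G0: "\<Gamma> \<in> Gamma_set n N AA BB" for \<Gamma> \<zeta>
  proof -
    obtain C D where G: "\<Gamma> = diag2 (n * N) (gamma n N C) (gamma n N D)"
      and cC: "\<forall>k\<in>{1..N}. cs n (C k)" and cD: "\<forall>k\<in>{1..N}. cs n (D k)"
      using GS[OF G0] by blast
    show ?thesis
    proof (rule normN1_le[OF NN])
      fix c k assume k: "k \<in> {1..N}"
      have k1: "1 \<le> k" "k \<le> N" using k by auto
      have kk: "(1/real k) * (\<Sum>l<k. normN1 n N \<zeta>) = normN1 n N \<zeta>" using k1 by simp
      show "norm1 n (z_block n N (mat_vec (2 * n * N) \<Gamma> \<zeta>) c k) \<le> normN1 n N \<zeta>"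
      proof (cases c)
        case False
        have "\<forall>l<k. norm1 n (mat_vec n (prodP n C (N-l)) \<zeta>) \<le> normN1 n N \<zeta>"
        proof (intro allI impI)
          fix l assume "l < k"
          have "norm1 n (mat_vec n (prodP n C (N-l)) \<zeta>) \<le> norm1 n \<zeta>"
            by (rule cs_norm[OF cs_P[OF cC]]) simp
          also have "\<dots> \<le> normN1 n N \<zeta>" using normN1_ge[of 1 N n \<zeta> False] NN zb1a by simp
          finally show "norm1 n (mat_vec n (prodP n C (N-l)) \<zeta>) \<le> normN1 n N \<zeta>" .
        qed
        from norm_blk_a[OF k1 this, of D] show ?thesis using False G kk by simp
      next
        case True
        have "\<forall>l<k. norm1 n (mat_vec n (prodP n D (N-l)) (\<lambda>j. \<zeta> (n*N+j))) \<le> normN1 n N \<zeta>"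
        proof (intro allI impI)
          fix l assume "l < k"
          have "norm1 n (mat_vec n (prodP n D (N-l)) (\<lambda>j. \<zeta> (n*N+j))) \<le> norm1 n (\<lambda>j. \<zeta> (n*N+j))"
            by (rule cs_norm[OF cs_P[OF cD]]) simp
          also have "\<dots> \<le> normN1 n N \<zeta>" using normN1_ge[of 1 N n \<zeta> True] NN zb1b by simp
          finally show "norm1 n (mat_vec n (prodP n D (N-l)) (\<lambda>j. \<zeta> (n*N+j))) \<le> normN1 n N \<zeta>" .
        qed
        from norm_blk_b[OF k1 this, of C] show ?thesis using True G kk by simp
      qed
    qed
  qed
  have partB: "mat_vec (2 * n * N) \<Gamma> \<zeta> \<in> E_space n N"
    if G0: "\<Gamma> \<in> Gamma_set n N AA BB" and Z0: "\<zeta> \<in> E_space n N" for \<Gamma> \<zeta>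
  proof -
    obtain C D where G: "\<Gamma> = diag2 (n * N) (gamma n N C) (gamma n N D)"
      and cC: "\<forall>k\<in>{1..N}. cs n (C k)" and cD: "\<forall>k\<in>{1..N}. cs n (D k)"
      using GS[OF G0] by blast
    have za: "(\<Sum>i<n. \<zeta> i) = 0" and zb: "(\<Sum>i<n. \<zeta> (n*N+i)) = 0"
      using Z0 unfolding E_space_def sum_a sum_b by simp_all
    have "(\<Sum>i<n. mat_vec (2 * n * N) \<Gamma> \<zeta> i) = (\<Sum>i<n. mat_vec n (prodP n C N) \<zeta> i)"
      unfolding G using block_a[of 1 N _ n C D \<zeta>] NN by (intro sum.cong) auto
    also have "\<dots> = 0" using sum_pres[OF cs_P[OF cC], of N] za by simp
    finally have 1: "(\<Sum>i<n. mat_vec (2 * n * N) \<Gamma> \<zeta> i) = 0" .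
    have "(\<Sum>i<n. mat_vec (2 * n * N) \<Gamma> \<zeta> (n*N+i)) = (\<Sum>i<n. mat_vec n (prodP n D N) (\<lambda>j. \<zeta> (n*N+j)) i)"
      unfolding G using block_b[of 1 N _ n C D \<zeta>] NN by (intro sum.cong) auto
    also have "\<dots> = 0" using sum_pres[OF cs_P[OF cD], of N] zb by simp
    finally have 2: "(\<Sum>i<n. mat_vec (2 * n * N) \<Gamma> \<zeta> (n*N+i)) = 0" .
    show ?thesis unfolding E_space_def sum_a sum_b using 1 2 by simp
  qed
  define ba where "ba = Max (\<beta>a ` {..<n})"
  define bb where "bb = Max (\<beta>b ` {..<n})"
  define qa where "qa = (\<Sum>i=1..N. ba ^ i) / real N"
  define qb where "qb = (\<Sum>i=1..N. bb ^ i) / real N"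
  have ba: "0 \<le> ba" "ba < 1" using Max_props[OF n assms(5)] unfolding ba_def by auto
  have bb: "0 \<le> bb" "bb < 1" using Max_props[OF n assms(6)] unfolding bb_def by auto
  have qlt: "max qa qb < 1" unfolding qa_def qb_def using q_lt1 ba bb NN by simp
  have qa0: "0 \<le> qa" unfolding qa_def using q_nonneg ba by simp
  have qb0: "0 \<le> qb" unfolding qb_def using q_nonneg bb by simp
  have partC: "normN1 n N (mat_vec (2 * n * N) (diag2 (n * N) (gamma n N (\<lambda>_. drop_matrix n \<alpha>a \<beta>a))
                                 (gamma n N (\<lambda>_. drop_matrix n \<alpha>b \<beta>b))) \<zeta>) \<le> max qa qb * normN1 n N \<zeta>"
    if "\<zeta> \<in> E_space n N" for \<zeta>
  proof (rule normN1_le[OF NN])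
    have za: "(\<Sum>i<n. \<zeta> i) = 0" and zb: "(\<Sum>i<n. \<zeta> (n*N+i)) = 0"
      using that unfolding E_space_def sum_a sum_b by simp_all
    have nz0: "0 \<le> normN1 n N \<zeta>" using normN1_ge[of 1 N n \<zeta> False] NN
      by (smt (verit) norm1_def sum_nonneg abs_ge_zero atLeastAtMost_iff order_refl)
    fix c k assume k: "k \<in> {1..N}"
    have k1: "1 \<le> k" "k \<le> N" using k by auto
    show "norm1 n (z_block n N (mat_vec (2 * n * N) (diag2 (n * N) (gamma n N (\<lambda>_. drop_matrix n \<alpha>a \<beta>a))
                                 (gamma n N (\<lambda>_. drop_matrix n \<alpha>b \<beta>b))) \<zeta>) c k) \<le> max qa qb * normN1 n N \<zeta>"
    proof (cases c)
      case False
      have "\<forall>l<k. norm1 n (mat_vec n (prodP n (\<lambda>_. drop_matrix n \<alpha>a \<beta>a) (N-l)) \<zeta>) \<le> ba ^ (N-l) * normN1 n N \<zeta>"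
      proof (intro allI impI)
        fix l assume "l < k"
        have "norm1 n (mat_vec n (prodP n (\<lambda>_. drop_matrix n \<alpha>a \<beta>a) (N-l)) \<zeta>) \<le> ba ^ (N-l) * norm1 n \<zeta>"
          using drop_pow[OF n assms(3,5) za, of "N-l"] unfolding ba_def by blast
        also have "\<dots> \<le> ba ^ (N-l) * normN1 n N \<zeta>"
          using normN1_ge[of 1 N n \<zeta> False] NN zb1a ba by (intro mult_left_mono) auto
        finally show "norm1 n (mat_vec n (prodP n (\<lambda>_. drop_matrix n \<alpha>a \<beta>a) (N-l)) \<zeta>) \<le> ba ^ (N-l) * normN1 n N \<zeta>" .
      qed
      from norm_blk_a[OF k1 this, of "\<lambda>_. drop_matrix n \<alpha>b \<beta>b"]
      have "norm1 n (z_block n N (mat_vec (2 * n * N) (diag2 (n * N) (gamma n N (\<lambda>_. drop_matrix n \<alpha>a \<beta>a))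
                                 (gamma n N (\<lambda>_. drop_matrix n \<alpha>b \<beta>b))) \<zeta>) False k)
           \<le> ((1/real k) * (\<Sum>l<k. ba ^ (N-l))) * normN1 n N \<zeta>"
        by (simp add: sum_distrib_right mult.assoc)
      also have "\<dots> \<le> qa * normN1 n N \<zeta>"
        unfolding qa_def using avg_ineq[of ba k N] ba k1 nz0 by (intro mult_right_mono) auto
      also have "\<dots> \<le> max qa qb * normN1 n N \<zeta>" using nz0 by (intro mult_right_mono) auto
      finally show ?thesis using False by simp
    next
      case True
      have "\<forall>l<k. norm1 n (mat_vec n (prodP n (\<lambda>_. drop_matrix n \<alpha>b \<beta>b) (N-l)) (\<lambda>j. \<zeta> (n*N+j))) \<le> bb ^ (N-l) * normN1 n N \<zeta>"
      proof (intro allI impI)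
        fix l assume "l < k"
        have "norm1 n (mat_vec n (prodP n (\<lambda>_. drop_matrix n \<alpha>b \<beta>b) (N-l)) (\<lambda>j. \<zeta> (n*N+j))) \<le> bb ^ (N-l) * norm1 n (\<lambda>j. \<zeta> (n*N+j))"
          using drop_pow[OF n assms(4,6) zb, of "N-l"] unfolding bb_def by blast
        also have "\<dots> \<le> bb ^ (N-l) * normN1 n N \<zeta>"
          using normN1_ge[of 1 N n \<zeta> True] NN zb1b bb by (intro mult_left_mono) auto
        finally show "norm1 n (mat_vec n (prodP n (\<lambda>_. drop_matrix n \<alpha>b \<beta>b) (N-l)) (\<lambda>j. \<zeta> (n*N+j))) \<le> bb ^ (N-l) * normN1 n N \<zeta>" .
      qed
      from norm_blk_b[OF k1 this, of "\<lambda>_. drop_matrix n \<alpha>a \<beta>a"]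
      have "norm1 n (z_block n N (mat_vec (2 * n * N) (diag2 (n * N) (gamma n N (\<lambda>_. drop_matrix n \<alpha>a \<beta>a))
                                 (gamma n N (\<lambda>_. drop_matrix n \<alpha>b \<beta>b))) \<zeta>) True k)
           \<le> ((1/real k) * (\<Sum>l<k. bb ^ (N-l))) * normN1 n N \<zeta>"
        by (simp add: sum_distrib_right mult.assoc)
      also have "\<dots> \<le> qb * normN1 n N \<zeta>"
        unfolding qb_def using avg_ineq[of bb k N] bb k1 nz0 by (intro mult_right_mono) auto
      also have "\<dots> \<le> max qa qb * normN1 n N \<zeta>" using nz0 by (intro mult_right_mono) auto
      finally show ?thesis using True by simp
    qed
  qed
  show ?thesis
    unfolding Let_def ba_def[symmetric] bb_def[symmetric] qa_def[symmetric] qb_def[symmetric]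
    using partA partB partC qlt by blast
qed

end
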